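(* Every two-directional orthogonal ray graph $G$ with given bipartition $(U,V)$ and without twins has at least one normalized representation.
   Context: All graphs are finite and simple. $G$ is a bipartite graph with a fixed bipartition $(U,V)$; $N(x)$ denotes the open neighborhood of $x$. Standing assumption: $G$ has no twins, i.e. no two distinct vertices $x\neq y$ with $N(x)=N(y)$. A representation of $G$ is a pair $(<_x,<_y)$ of linear orders on $V(G)$ such that for all $u\in U$ and $v\in V$: $uv\in E(G)$ iff ($u<_x v$ and $u<_y v$). $G$ is a two-directional orthogonal ray graph if it has a representation. A representation $(<_x,<_y)$ is normalized if: (a) for all $u_1,u_2\in U$: ($u_1<_x u_2$ and $u_1<_y u_2$) iff $N(u_1)\supsetneq N(u_2)$; (b) for all $v_1,v_2\in V$: ($v_1<_x v_2$ and $v_1<_y v_2$) iff $N(v_1)\subsetneq N(v_2)$; (c) for all $u\in U$, $v\in V$: ($v<_x u$ and $v<_y u$) iff for every $v'\in N(u)$, $N(v)\subsetneq N(v')$. *)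

theory Defs
  imports Main
begin

definition bipartite_graph :: "'a set \<Rightarrow> 'a set \<Rightarrow> ('a \<Rightarrow> 'a \<Rightarrow> bool) \<Rightarrow> bool" where
  "bipartite_graph U V E \<longleftrightarrow>
     finite U \<and> finite V \<and> U \<inter> V = {} \<and>
     (\<forall>x y. E x y \<longrightarrow> E y x) \<and>
     (\<forall>x y. E x y \<longrightarrow> (x \<in> U \<and> y \<in> V) \<or> (x \<in> V \<and> y \<in> U))"

definition nbhd :: "('a \<Rightarrow> 'a \<Rightarrow> bool) \<Rightarrow> 'a \<Rightarrow> 'a set" where
  "nbhd E x = {y. E x y}"

definition twin_free :: "'a set \<Rightarrow> 'a set \<Rightarrow> ('a \<Rightarrow> 'a \<Rightarrow> bool) \<Rightarrow> bool" where
  "twin_free U V E \<longleftrightarrow>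
     (\<forall>x\<in>U \<union> V. \<forall>y\<in>U \<union> V. x \<noteq> y \<longrightarrow> nbhd E x \<noteq> nbhd E y)"

definition strict_linear_order_on :: "'a set \<Rightarrow> ('a \<Rightarrow> 'a \<Rightarrow> bool) \<Rightarrow> bool" where
  "strict_linear_order_on S r \<longleftrightarrow>
     (\<forall>x y. r x y \<longrightarrow> x \<in> S \<and> y \<in> S) \<and>
     (\<forall>x\<in>S. \<not> r x x) \<and>
     (\<forall>x\<in>S. \<forall>y\<in>S. \<forall>z\<in>S. r x y \<longrightarrow> r y z \<longrightarrow> r x z) \<and>
     (\<forall>x\<in>S. \<forall>y\<in>S. x \<noteq> y \<longrightarrow> r x y \<or> r y x)"

definition representation ::
  "'a set \<Rightarrow> 'a set \<Rightarrow> ('a \<Rightarrow> 'a \<Rightarrow> bool) \<Rightarrow> ('a \<Rightarrow> 'a \<Rightarrow> bool) \<Rightarrow> ('a \<Rightarrow> 'a \<Rightarrow> bool) \<Rightarrow> bool" where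
  "representation U V E lx ly \<longleftrightarrow>
     strict_linear_order_on (U \<union> V) lx \<and> strict_linear_order_on (U \<union> V) ly \<and>
     (\<forall>u\<in>U. \<forall>v\<in>V. E u v \<longleftrightarrow> (lx u v \<and> ly u v))"

definition tdor_graph :: "'a set \<Rightarrow> 'a set \<Rightarrow> ('a \<Rightarrow> 'a \<Rightarrow> bool) \<Rightarrow> bool" where
  "tdor_graph U V E \<longleftrightarrow> (\<exists>lx ly. representation U V E lx ly)"

definition normalized_representation ::
  "'a set \<Rightarrow> 'a set \<Rightarrow> ('a \<Rightarrow> 'a \<Rightarrow> bool) \<Rightarrow> ('a \<Rightarrow> 'a \<Rightarrow> bool) \<Rightarrow> ('a \<Rightarrow> 'a \<Rightarrow> bool) \<Rightarrow> bool" where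
  "normalized_representation U V E lx ly \<longleftrightarrow>
     representation U V E lx ly \<and>
     (\<forall>u1\<in>U. \<forall>u2\<in>U. (lx u1 u2 \<and> ly u1 u2) \<longleftrightarrow> nbhd E u1 \<supset> nbhd E u2) \<and>
     (\<forall>v1\<in>V. \<forall>v2\<in>V. (lx v1 v2 \<and> ly v1 v2) \<longleftrightarrow> nbhd E v1 \<subset> nbhd E v2) \<and>
     (\<forall>u\<in>U. \<forall>v\<in>V. (lx v u \<and> ly v u) \<longleftrightarrow>
        (\<forall>v'\<in>nbhd E u. nbhd E v \<subset> nbhd E v'))"

end

theory Submission
  imports Defs
begin

locale setting =
  fixes U V :: "'a set" and E :: "'a \<Rightarrow> 'a \<Rightarrow> bool" and r :: "'a \<Rightarrow> 'a \<Rightarrow> bool"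
  assumes bip: "bipartite_graph U V E"
    and slo: "strict_linear_order_on (U \<union> V) r"
    and P: "\<forall>u\<in>U. \<forall>v\<in>V. E u v \<longrightarrow> r u v"
begin

abbreviation "S \<equiv> U \<union> V"
abbreviation "N \<equiv> nbhd E"

definition LL where "LL u = {w\<in>S. \<forall>v'\<in>N u. r w v'}"
definition MM where "MM v = (\<Union>u'\<in>N v. LL u')"
definition DD where "DD w = (if w \<in> U then {w'\<in>V. \<forall>v'\<in>N w. N w' \<subset> N v'}
                              else {w'\<in>V. N w' \<subseteq> N w})"
definition k1 where "k1 w = card (if w \<in> U then LL w else MM w)"
definition k2 where "k2 w = card (DD w)"
definition k3 where "k3 w = (if w \<in> U then card V + 1 - card (N w) else 0)"
definition newo where "newo a b \<longleftrightarrow> a \<in> S \<and> b \<in> S \<and>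
  (k1 a < k1 b \<or> k1 a = k1 b \<and> (k2 a < k2 b \<or> k2 a = k2 b \<and>
     (k3 a < k3 b \<or> k3 a = k3 b \<and> r a b)))"

lemma finS: "finite S" and finV: "finite V" and disj: "U \<inter> V = {}"
  and symE: "E x y \<Longrightarrow> E y x"
  and EUV: "E x y \<Longrightarrow> (x \<in> U \<and> y \<in> V) \<or> (x \<in> V \<and> y \<in> U)"
  using bip unfolding bipartite_graph_def by auto

lemma NU: "u \<in> U \<Longrightarrow> N u \<subseteq> V" using EUV disj by (auto simp: nbhd_def)
lemma NV: "v \<in> V \<Longrightarrow> N v \<subseteq> U" using EUV disj by (auto simp: nbhd_def)
lemma memN: "y \<in> N x \<longleftrightarrow> E x y" by (simp add: nbhd_def)

lemma r_in: "r x y \<Longrightarrow> x \<in> S \<and> y \<in> S"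
  and r_irr: "x \<in> S \<Longrightarrow> \<not> r x x"
  and r_trans: "x \<in> S \<Longrightarrow> y \<in> S \<Longrightarrow> z \<in> S \<Longrightarrow> r x y \<Longrightarrow> r y z \<Longrightarrow> r x z"
  and r_lin: "x \<in> S \<Longrightarrow> y \<in> S \<Longrightarrow> x \<noteq> y \<Longrightarrow> r x y \<or> r y x"
  using slo unfolding strict_linear_order_on_def by blast+

lemma LL_sub: "LL u \<subseteq> S" by (auto simp: LL_def)
lemma MM_sub: "MM v \<subseteq> S" using LL_sub by (auto simp: MM_def)

lemma newo_slo: "strict_linear_order_on S newo"
proof -
  have 1: "\<forall>x y. newo x y \<longrightarrow> x \<in> S \<and> y \<in> S" by (simp add: newo_def)
  have 2: "\<forall>x\<in>S. \<not> newo x x" using r_irr by (auto simp: newo_def)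
  have 3: "\<forall>x\<in>S. \<forall>y\<in>S. \<forall>z\<in>S. newo x y \<longrightarrow> newo y z \<longrightarrow> newo x z"
  proof (intro ballI impI)
    fix x y z assume "x \<in> S" "y \<in> S" "z \<in> S" "newo x y" "newo y z"
    thus "newo x z" using r_trans[of x y z] unfolding newo_def by auto
  qed
  have 4: "\<forall>x\<in>S. \<forall>y\<in>S. x \<noteq> y \<longrightarrow> newo x y \<or> newo y x"
  proof (intro ballI impI)
    fix x y assume "x \<in> S" "y \<in> S" "x \<noteq> y"
    thus "newo x y \<or> newo y x" using r_lin[of x y] unfolding newo_def by auto
  qed
  show ?thesis using 1 2 3 4 unfolding strict_linear_order_on_def by blast
qed

lemma newo_asym: "newo a b \<Longrightarrow> \<not> newo b a"
  unfolding newo_def using r_trans[of a b a] r_irr[of a] by auto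

lemma DD_adj:
  assumes u: "u \<in> U" and v: "v \<in> V" and e: "E u v"
  shows "DD u \<subset> DD v"
proof -
  have "v \<in> N u" using e by (simp add: memN)
  hence "DD u \<subseteq> DD v" using u v disj by (auto simp: DD_def)
  moreover have "v \<in> DD v" "v \<notin> DD u" using u v disj by (auto simp: DD_def memN e)
  ultimately show ?thesis by blast
qed

lemma DD_finite: "finite (DD w)" using finV by (auto simp: DD_def)

lemma L1:
  assumes u: "u \<in> U" and v: "v \<in> V" and e: "E u v"
  shows "newo u v"
proof -
  have "u \<in> N v" using symE[OF e] by (simp add: memN)
  hence "LL u \<subseteq> MM v" by (auto simp: MM_def)
  hence "k1 u \<le> k1 v" using u v disj finS MM_sub
    by (auto simp: k1_def intro!: card_mono dest: finite_subset)
  moreover have "k2 u < k2 v" using DD_adj[OF u v e] DD_finite by (simp add: k2_def psubset_card_mono)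
  ultimately show ?thesis using u v by (auto simp: newo_def)
qed

lemma L2:
  assumes u: "u \<in> U" and v: "v \<in> V" and rv: "r v u"
  shows "newo v u"
proof -
  have "MM v \<subseteq> {w\<in>S. r w v}"
  proof
    fix w assume "w \<in> MM v"
    then obtain u' where "E v u'" "w \<in> LL u'" by (auto simp: MM_def memN)
    thus "w \<in> {w\<in>S. r w v}" using symE by (auto simp: LL_def memN)
  qed
  moreover have "{w\<in>S. r w v} \<subset> LL u"
  proof -
    have "{w\<in>S. r w v} \<subseteq> LL u"
    proof
      fix w assume w: "w \<in> {w\<in>S. r w v}"
      { fix v' assume "v' \<in> N u"
        hence "E u v'" "v' \<in> V" using NU[OF u] by (auto simp: memN)
        hence "r u v'" using P u by auto
        moreover have "r w u" using w rv r_trans[of w v u] r_in[OF rv] by auto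
        ultimately have "r w v'" using r_trans[of w u v'] r_in by blast }
      thus "w \<in> LL u" using w by (auto simp: LL_def)
    qed
    moreover have "v \<in> LL u"
    proof -
      { fix v' assume "v' \<in> N u"
        hence "E u v'" "v' \<in> V" using NU[OF u] by (auto simp: memN)
        hence "r u v'" using P u by auto
        hence "r v v'" using rv r_trans[of v u v'] r_in by blast }
      thus ?thesis using v by (auto simp: LL_def)
    qed
    moreover have "v \<notin> {w\<in>S. r w v}" using r_irr v by auto
    ultimately show ?thesis by blast
  qed
  ultimately have "MM v \<subset> LL u" by blast
  hence "k1 v < k1 u" using u v disj finS LL_sub
    by (auto simp: k1_def intro!: psubset_card_mono dest: finite_subset)
  thus ?thesis using u v by (auto simp: newo_def)
qed

lemma Aprime:
  assumes u1: "u1 \<in> U" and u2: "u2 \<in> U" and sup: "N u1 \<supset> N u2"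
  shows "newo u1 u2"
proof -
  have "LL u1 \<subseteq> LL u2" using sup by (auto simp: LL_def)
  hence a: "k1 u1 \<le> k1 u2" using u1 u2 finS LL_sub
    by (auto simp: k1_def intro!: card_mono dest: finite_subset)
  have "DD u1 \<subseteq> DD u2" using sup u1 u2 by (auto simp: DD_def)
  hence b: "k2 u1 \<le> k2 u2" using DD_finite by (simp add: k2_def card_mono)
  have f1: "finite (N u1)" using NU[OF u1] finV finite_subset by blast
  have "card (N u2) < card (N u1)" using sup f1 psubset_card_mono by blast
  moreover have "card (N u1) \<le> card V" using NU[OF u1] finV card_mono by blast
  ultimately have c: "k3 u1 < k3 u2" using u1 u2 by (simp add: k3_def)
  show ?thesis using a b c u1 u2 by (auto simp: newo_def)
qed

lemma Bprime:
  assumes v1: "v1 \<in> V" and v2: "v2 \<in> V" and sub: "N v1 \<subset> N v2"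
  shows "newo v1 v2"
proof -
  have "MM v1 \<subseteq> MM v2" using sub by (auto simp: MM_def)
  hence a: "k1 v1 \<le> k1 v2" using v1 v2 disj finS MM_sub
    by (auto simp: k1_def intro!: card_mono dest: finite_subset)
  have "DD v1 \<subseteq> DD v2" using sub v1 v2 disj by (auto simp: DD_def)
  moreover have "v2 \<in> DD v2" "v2 \<notin> DD v1" using sub v1 v2 disj by (auto simp: DD_def)
  ultimately have "DD v1 \<subset> DD v2" by blast
  hence b: "k2 v1 < k2 v2" using DD_finite by (simp add: k2_def psubset_card_mono)
  show ?thesis using a b v1 v2 by (auto simp: newo_def)
qed

lemma Cprime:
  assumes u: "u \<in> U" and v: "v \<in> V" and h: "\<forall>v'\<in>N u. N v \<subset> N v'"
  shows "newo v u"
proof -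
  have "MM v \<subseteq> LL u"
  proof
    fix w assume "w \<in> MM v"
    then obtain u' where u': "u' \<in> N v" "w \<in> LL u'" by (auto simp: MM_def)
    { fix v' assume "v' \<in> N u"
      hence "u' \<in> N v'" using h u' by blast
      hence "v' \<in> N u'" using symE by (auto simp: memN)
      hence "r w v'" using u' by (auto simp: LL_def) }
    thus "w \<in> LL u" using u' by (auto simp: LL_def)
  qed
  hence a: "k1 v \<le> k1 u" using u v disj finS LL_sub
    by (auto simp: k1_def intro!: card_mono dest: finite_subset)
  have "DD v \<subseteq> DD u" using h u v disj by (auto simp: DD_def)
  hence b: "k2 v \<le> k2 u" using DD_finite by (simp add: k2_def card_mono)
  have "card (N u) \<le> card V" using NU[OF u] finV card_mono by blast
  hence c: "k3 v < k3 u" using u v disj by (auto simp: k3_def)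
  show ?thesis using a b c u v by (auto simp: newo_def)
qed

end

lemma only_if_dirs:
  assumes bip: "bipartite_graph U V E" and tf: "twin_free U V E"
    and rep: "representation U V E lx ly"
  shows "\<forall>u1\<in>U. \<forall>u2\<in>U. lx u1 u2 \<and> ly u1 u2 \<longrightarrow> nbhd E u1 \<supset> nbhd E u2"
    and "\<forall>v1\<in>V. \<forall>v2\<in>V. lx v1 v2 \<and> ly v1 v2 \<longrightarrow> nbhd E v1 \<subset> nbhd E v2"
    and "\<forall>u\<in>U. \<forall>v\<in>V. lx v u \<and> ly v u \<longrightarrow> (\<forall>v'\<in>nbhd E u. nbhd E v \<subset> nbhd E v')"
proof -
  have sx: "strict_linear_order_on (U \<union> V) lx" and sy: "strict_linear_order_on (U \<union> V) ly"
    and ad: "\<forall>u\<in>U. \<forall>v\<in>V. E u v \<longleftrightarrow> (lx u v \<and> ly u v)" using rep by (auto simp: representation_def)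
  have symE: "\<And>x y. E x y \<Longrightarrow> E y x"
    and EUV: "\<And>x y. E x y \<Longrightarrow> (x \<in> U \<and> y \<in> V) \<or> (x \<in> V \<and> y \<in> U)"
    and disj: "U \<inter> V = {}"
    using bip unfolding bipartite_graph_def by auto
  have trx: "\<And>x y z. x \<in> U \<union> V \<Longrightarrow> y \<in> U \<union> V \<Longrightarrow> z \<in> U \<union> V \<Longrightarrow> lx x y \<Longrightarrow> lx y z \<Longrightarrow> lx x z"
    and irx: "\<And>x. x \<in> U \<union> V \<Longrightarrow> \<not> lx x x"
    using sx unfolding strict_linear_order_on_def by blast+
  have trY: "\<And>x y z. x \<in> U \<union> V \<Longrightarrow> y \<in> U \<union> V \<Longrightarrow> z \<in> U \<union> V \<Longrightarrow> ly x y \<Longrightarrow> ly y z \<Longrightarrow> ly x z"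
    using sy unfolding strict_linear_order_on_def by blast+
  have tw: "\<And>x y. x \<in> U \<union> V \<Longrightarrow> y \<in> U \<union> V \<Longrightarrow> x \<noteq> y \<Longrightarrow> nbhd E x \<noteq> nbhd E y"
    using tf unfolding twin_free_def by blast
  show A: "\<forall>u1\<in>U. \<forall>u2\<in>U. lx u1 u2 \<and> ly u1 u2 \<longrightarrow> nbhd E u1 \<supset> nbhd E u2"
  proof (intro ballI impI)
    fix u1 u2 assume u: "u1 \<in> U" "u2 \<in> U" "lx u1 u2 \<and> ly u1 u2"
    have "nbhd E u2 \<subseteq> nbhd E u1"
    proof
      fix v assume "v \<in> nbhd E u2"
      hence e: "E u2 v" by (simp add: nbhd_def)
      hence vV: "v \<in> V" using EUV disj u by blast
      hence "lx u2 v \<and> ly u2 v" using ad e u by blast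
      hence "lx u1 v \<and> ly u1 v" using u trx trY vV by blast
      thus "v \<in> nbhd E u1" using ad u vV by (simp add: nbhd_def)
    qed
    moreover have "u1 \<noteq> u2" using irx u by blast
    ultimately show "nbhd E u1 \<supset> nbhd E u2" using tw u by blast
  qed
  show B: "\<forall>v1\<in>V. \<forall>v2\<in>V. lx v1 v2 \<and> ly v1 v2 \<longrightarrow> nbhd E v1 \<subset> nbhd E v2"
  proof (intro ballI impI)
    fix v1 v2 assume v: "v1 \<in> V" "v2 \<in> V" "lx v1 v2 \<and> ly v1 v2"
    have "nbhd E v1 \<subseteq> nbhd E v2"
    proof
      fix u assume "u \<in> nbhd E v1"
      hence e: "E u v1" by (simp add: nbhd_def symE)
      hence uU: "u \<in> U" using EUV disj v by blast
      hence "lx u v1 \<and> ly u v1" using ad e v by blast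
      hence "lx u v2 \<and> ly u v2" using v trx trY uU by blast
      thus "u \<in> nbhd E v2" using ad v uU symE by (simp add: nbhd_def)
    qed
    moreover have "v1 \<noteq> v2" using irx v by blast
    ultimately show "nbhd E v1 \<subset> nbhd E v2" using tw v by blast
  qed
  show "\<forall>u\<in>U. \<forall>v\<in>V. lx v u \<and> ly v u \<longrightarrow> (\<forall>v'\<in>nbhd E u. nbhd E v \<subset> nbhd E v')"
  proof (intro ballI impI)
    fix u v v' assume h: "u \<in> U" "v \<in> V" "lx v u \<and> ly v u" "v' \<in> nbhd E u"
    hence e: "E u v'" by (simp add: nbhd_def)
    hence vV: "v' \<in> V" using EUV disj h by blast
    hence "lx u v' \<and> ly u v'" using ad e h by blast
    hence "lx v v' \<and> ly v v'" using h trx trY vV by blast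
    thus "nbhd E v \<subset> nbhd E v'" using B h vV by blast
  qed
qed

theorem mainTheorem2:
  fixes U V :: "'a set" and E :: "'a \<Rightarrow> 'a \<Rightarrow> bool"
  assumes "bipartite_graph U V E"
    and "twin_free U V E"
    and "tdor_graph U V E"
  shows "\<exists>lx ly. normalized_representation U V E lx ly"
proof -
  obtain lx ly where rep: "representation U V E lx ly" using assms(3) by (auto simp: tdor_graph_def)
  have sx: "strict_linear_order_on (U \<union> V) lx" and sy: "strict_linear_order_on (U \<union> V) ly"
    and ad: "\<forall>u\<in>U. \<forall>v\<in>V. E u v \<longleftrightarrow> (lx u v \<and> ly u v)" using rep by (auto simp: representation_def)
  interpret X: setting U V E lx using assms(1) sx ad by (simp add: setting_def)
  interpret Y: setting U V E ly using assms(1) sy ad by (simp add: setting_def)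
  have disj: "U \<inter> V = {}" by (rule X.disj)
  have rep2: "representation U V E X.newo Y.newo"
    unfolding representation_def
  proof (intro conjI X.newo_slo Y.newo_slo ballI)
    fix u v assume u: "u \<in> U" and v: "v \<in> V"
    show "E u v \<longleftrightarrow> X.newo u v \<and> Y.newo u v"
    proof
      assume "E u v" thus "X.newo u v \<and> Y.newo u v" using X.L1 Y.L1 u v by blast
    next
      assume h: "X.newo u v \<and> Y.newo u v"
      show "E u v"
      proof (rule ccontr)
        assume "\<not> E u v"
        hence "\<not> (lx u v \<and> ly u v)" using ad u v by blast
        moreover have "u \<noteq> v" using u v disj by blast
        ultimately have "lx v u \<or> ly v u" using X.r_lin[of u v] Y.r_lin[of u v] u v by blast
        hence "X.newo v u \<or> Y.newo v u" using X.L2 Y.L2 u v by blast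
        thus False using h X.newo_asym Y.newo_asym by blast
      qed
    qed
  qed
  note oi = only_if_dirs[OF assms(1) assms(2) rep2]
  have A: "\<forall>u1\<in>U. \<forall>u2\<in>U. (X.newo u1 u2 \<and> Y.newo u1 u2) \<longleftrightarrow> nbhd E u1 \<supset> nbhd E u2"
  proof (intro ballI)
    fix u1 u2 assume a: "u1 \<in> U" "u2 \<in> U"
    show "(X.newo u1 u2 \<and> Y.newo u1 u2) \<longleftrightarrow> nbhd E u1 \<supset> nbhd E u2"
      using oi(1) a X.Aprime[OF a] Y.Aprime[OF a] by blast
  qed
  have B: "\<forall>v1\<in>V. \<forall>v2\<in>V. (X.newo v1 v2 \<and> Y.newo v1 v2) \<longleftrightarrow> nbhd E v1 \<subset> nbhd E v2"
  proof (intro ballI)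
    fix v1 v2 assume a: "v1 \<in> V" "v2 \<in> V"
    show "(X.newo v1 v2 \<and> Y.newo v1 v2) \<longleftrightarrow> nbhd E v1 \<subset> nbhd E v2"
      using oi(2) a X.Bprime[OF a] Y.Bprime[OF a] by blast
  qed
  have C: "\<forall>u\<in>U. \<forall>v\<in>V. (X.newo v u \<and> Y.newo v u) \<longleftrightarrow>
        (\<forall>v'\<in>nbhd E u. nbhd E v \<subset> nbhd E v')"
  proof (intro ballI)
    fix u v assume a: "u \<in> U" "v \<in> V"
    have l: "X.newo v u \<and> Y.newo v u \<Longrightarrow> (\<forall>v'\<in>nbhd E u. nbhd E v \<subset> nbhd E v')"
      using oi(3) a by blast
    show "(X.newo v u \<and> Y.newo v u) \<longleftrightarrow> (\<forall>v'\<in>nbhd E u. nbhd E v \<subset> nbhd E v')"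
      using l X.Cprime[OF a] Y.Cprime[OF a] by blast
  qed
  have "normalized_representation U V E X.newo Y.newo"
    unfolding normalized_representation_def by (intro conjI rep2 A B C)
  thus ?thesis by blast
qed

end
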